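(* There is a constant $c>0$ such that for all integers $n\ge 2$ and $\tau\ge 1$ there exist a value $\varepsilon\ge 0$ and a set $\mathcal X$ of $n$ entities, each moving along a trajectory of $\tau$ edges (in general position), whose Reeb graph $\mathcal R$ has at least $c\,\tau n^2$ vertices and at least $c\,\tau n^2$ edges. In other words, the Reeb graph can have $\Omega(\tau n^2)$ vertices and $\Omega(\tau n^2)$ edges.
   Context: Let $\mathcal X$ be a set of $n$ entities. All trajectories are sampled at common times $t_0<t_1<\dots<t_\tau$; each entity $x$ has a position $x(t_i)\in\mathbb R^2$ at each $t_i$ and moves with constant velocity between consecutive sample times, so its trajectory is a polygonal path with $\tau$ edges defined on $[t_0,t_\tau]$. Fix $\varepsilon\ge 0$. Two entities $x,y$ are directly connected at time $t$ if their closed discs of radius $\varepsilon$ centred at $x(t)$ and $y(t)$ intersect, i.e. $\|x(t)-y(t)\|\le 2\varepsilon$. They are $\varepsilon$-connected at time $t$ if there is a sequence $x=x_0,\dots,x_k=y$ of entities with $x_i,x_{i+1}$ directly connected at $t$ for all $i$. A component at time $t$ is a maximal set of pairwise $\varepsilon$-connected entities; the components at time $t$ partition $\mathcal X$. General position: no two distinct events at which a pair of entities becomes directly connected or directly disconnected occur at the same time. The Reeb graph $\mathcal R$ is the directed graph describing the evolution of the components over $[t_0,t_\tau]$: it has a start vertex for each component at $t_0$ (in-degree 0, out-degree 1), an end vertex for each component at $t_\tau$ (in-degree 1, out-degree 0), a merge vertex (in-degree 2, out-degree 1) at each time two components unite into one, and a split vertex (in-degree 1, out-degree 2) at each time a component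 splits into two; each vertex $v$ has a time $t_v$, and each edge $e=(u,v)$ with $t_u<t_v$ corresponds to a set $C_e$ of entities that is a component at every time in $[t_u,t_v]$. *)

theory Defs
  imports "HOL-Analysis.Analysis"
begin

text \<open>Entities are 0,...,n-1. Sample times T 0 < T 1 < ... < T tau.
  P x i :: real^2 is the position of entity x at sample time T i; between consecutive
  sample times the entity moves with constant velocity. Outside [T 0, T tau] the
  position is clamped (irrelevant: everything below is restricted to [T 0, T tau]).\<close>

definition traj :: "(nat \<Rightarrow> real) \<Rightarrow> nat \<Rightarrow> (nat \<Rightarrow> real^2) \<Rightarrow> real \<Rightarrow> real^2" where
  "traj T tau p s =
     (if s \<le> T 0 then p 0
      else if T tau \<le> s then p tau
      else (let i = (THE i. i < tau \<and> T i \<le> s \<and> s < T (Suc i))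
            in p i + ((s - T i) / (T (Suc i) - T i)) *\<^sub>R (p (Suc i) - p i)))"

text \<open>Direct connection: the closed eps-discs around the two positions intersect.\<close>
definition dconn :: "nat \<Rightarrow> (nat \<Rightarrow> real) \<Rightarrow> (nat \<Rightarrow> nat \<Rightarrow> real^2) \<Rightarrow> real
    \<Rightarrow> nat \<Rightarrow> nat \<Rightarrow> real \<Rightarrow> bool" where
  "dconn tau T P eps x y s \<longleftrightarrow> dist (traj T tau (P x) s) (traj T tau (P y) s) \<le> 2 * eps"

definition conn_rel :: "nat \<Rightarrow> nat \<Rightarrow> (nat \<Rightarrow> real) \<Rightarrow> (nat \<Rightarrow> nat \<Rightarrow> real^2) \<Rightarrow> real
    \<Rightarrow> real \<Rightarrow> (nat \<times> nat) set" where
  "conn_rel n tau T P eps s = {(x, y). x < n \<and> y < n \<and> dconn tau T P eps x y s}"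

definition comps :: "nat \<Rightarrow> nat \<Rightarrow> (nat \<Rightarrow> real) \<Rightarrow> (nat \<Rightarrow> nat \<Rightarrow> real^2) \<Rightarrow> real
    \<Rightarrow> real \<Rightarrow> nat set set" where
  "comps n tau T P eps s = {..<n} // (conn_rel n tau T P eps s)\<^sup>*"

definition event :: "nat \<Rightarrow> nat \<Rightarrow> (nat \<Rightarrow> real) \<Rightarrow> (nat \<Rightarrow> nat \<Rightarrow> real^2) \<Rightarrow> real
    \<Rightarrow> nat \<Rightarrow> nat \<Rightarrow> real \<Rightarrow> bool" where
  "event n tau T P eps x y s \<longleftrightarrow> x < n \<and> y < n \<and> x \<noteq> y \<and> T 0 \<le> s \<and> s \<le> T tau \<and>
     (\<forall>\<delta>>0. \<exists>s1 s2. \<bar>s1 - s\<bar> < \<delta> \<and> \<bar>s2 - s\<bar> < \<delta> \<and>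
        dconn tau T P eps x y s1 \<and> \<not> dconn tau T P eps x y s2)"

text \<open>General position: every event is a single clean event (the pair becomes connected
  or becomes disconnected at s, not both, e.g. no tangential touching), and events of
  different pairs never happen at the same time.\<close>
definition general_position :: "nat \<Rightarrow> nat \<Rightarrow> (nat \<Rightarrow> real) \<Rightarrow> (nat \<Rightarrow> nat \<Rightarrow> real^2)
    \<Rightarrow> real \<Rightarrow> bool" where
  "general_position n tau T P eps \<longleftrightarrow>
     (\<forall>x y s. event n tau T P eps x y s \<longrightarrow>
        (\<exists>\<delta>>0. \<exists>b. (\<forall>s'. s - \<delta> < s' \<and> s' < s \<longrightarrow> dconn tau T P eps x y s' = b) \<and>
                   (\<forall>s'. s < s' \<and> s' < s + \<delta> \<longrightarrow> dconn tau T P eps x y s' = (\<not> b)))) \<and>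
     (\<forall>x y x' y' s. event n tau T P eps x y s \<and> event n tau T P eps x' y' s
        \<longrightarrow> {x, y} = {x', y'})"

text \<open>Times in (T 0, T tau) at which the component partition changes; under general
  position these are exactly the times of the merge and split vertices.\<close>
definition change_time :: "nat \<Rightarrow> nat \<Rightarrow> (nat \<Rightarrow> real) \<Rightarrow> (nat \<Rightarrow> nat \<Rightarrow> real^2)
    \<Rightarrow> real \<Rightarrow> real \<Rightarrow> bool" where
  "change_time n tau T P eps s \<longleftrightarrow>
     \<not> (\<exists>\<delta>>0. \<forall>s'. \<bar>s' - s\<bar> < \<delta> \<longrightarrow> comps n tau T P eps s' = comps n tau T P eps s)"

text \<open>Number of vertices of the Reeb graph: start vertices + end vertices +
  merge/split vertices.\<close>
definition reeb_vertex_count :: "nat \<Rightarrow> nat \<Rightarrow> (nat \<Rightarrow> real) \<Rightarrow> (nat \<Rightarrow> nat \<Rightarrow> real^2)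
    \<Rightarrow> real \<Rightarrow> nat" where
  "reeb_vertex_count n tau T P eps =
     card (comps n tau T P eps (T 0)) + card (comps n tau T P eps (T tau)) +
     card {s. T 0 < s \<and> s < T tau \<and> change_time n tau T P eps s}"

definition lifetime :: "nat \<Rightarrow> nat \<Rightarrow> (nat \<Rightarrow> real) \<Rightarrow> (nat \<Rightarrow> nat \<Rightarrow> real^2)
    \<Rightarrow> real \<Rightarrow> nat set \<Rightarrow> real set" where
  "lifetime n tau T P eps C = {s. T 0 \<le> s \<and> s \<le> T tau \<and> C \<in> comps n tau T P eps s}"

text \<open>Edges of the Reeb graph: each edge e corresponds to a set C_e together with a maximal
  time interval on which C_e is a component (a connected component of its lifetime).\<close>
definition reeb_edges :: "nat \<Rightarrow> nat \<Rightarrow> (nat \<Rightarrow> real) \<Rightarrow> (nat \<Rightarrow> nat \<Rightarrow> real^2)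
    \<Rightarrow> real \<Rightarrow> (nat set \<times> real set) set" where
  "reeb_edges n tau T P eps =
     {(C, J). C \<subseteq> {..<n} \<and> J \<in> components (lifetime n tau T P eps C)}"

end

theory Submission
  imports Defs
begin



definition traj1 :: "(nat \<Rightarrow> real) \<Rightarrow> nat \<Rightarrow> (nat \<Rightarrow> real) \<Rightarrow> real \<Rightarrow> real" where
  "traj1 T tau p s =
     (if s \<le> T 0 then p 0
      else if T tau \<le> s then p tau
      else (let i = (THE i. i < tau \<and> T i \<le> s \<and> s < T (Suc i))
            in p i + ((s - T i) / (T (Suc i) - T i)) * (p (Suc i) - p i)))"

lemma traj_lin: "traj T tau (\<lambda>l. (f l) *\<^sub>R v) s = (traj1 T tau f s) *\<^sub>R v"
proof -
  have h: "\<And>a b r. a *\<^sub>R v + r *\<^sub>R (b *\<^sub>R v - a *\<^sub>R v) = (a + r * (b - a)) *\<^sub>R v"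
    by (simp add: algebra_simps)
  show ?thesis unfolding traj_def traj1_def Let_def by (simp only: h) simp
qed

lemma traj1_aff: "traj1 T tau (\<lambda>l. b + d * f l) s = b + d * traj1 T tau f s"
proof -
  have gen: "\<And>x y r::real. b + d*x + r*((b + d*y) - (b + d*x)) = b + d*(x + r*(y - x))"
    by (simp add: algebra_simps)
  show ?thesis
  proof (cases "s \<le> T 0")
    case True then show ?thesis unfolding traj1_def by simp
  next
    case F1: False
    show ?thesis
    proof (cases "T tau \<le> s")
      case True then show ?thesis unfolding traj1_def using F1 by simp
    next
      case False
      define i where "i = (THE i. i < tau \<and> T i \<le> s \<and> s < T (Suc i))"
      define r where "r = (s - T i) / (T (Suc i) - T i)"
      have "traj1 T tau (\<lambda>l. b + d * f l) s = b + d * f i + r * ((b + d * f (Suc i)) - (b + d * f i))"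
        unfolding traj1_def Let_def i_def[symmetric] r_def[symmetric] using F1 False by simp
      also have "\<dots> = b + d * (f i + r * (f (Suc i) - f i))" by (rule gen)
      also have "\<dots> = b + d * traj1 T tau f s"
        unfolding traj1_def Let_def i_def[symmetric] r_def[symmetric] using F1 False by simp
      finally show ?thesis .
    qed
  qed
qed

lemma traj1_seg:
  assumes w: "w > 0" and l: "l < tau" and s1: "w * real l \<le> s" and s2: "s \<le> w * real (Suc l)"
  shows "traj1 (\<lambda>i. w * real i) tau p s = p l + (s - w * real l) / w * (p (Suc l) - p l)"
proof -
  have wl: "w * real (Suc l) - w * real l = w" by (simp add: algebra_simps)
  have T0: "w * real 0 = 0" by simp
  show ?thesis
  proof (cases "s \<le> 0")
    case True
    then have "w * real l \<le> 0" using s1 by linarith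
    then have "real l \<le> 0" using w by (simp add: mult_le_0_iff)
    then have l0: "l = 0" by simp
    then have s0: "s = 0" using s1 True by simp
    have "traj1 (\<lambda>i. w * real i) tau p s = p 0" unfolding traj1_def using True by simp
    then show ?thesis using l0 s0 by simp
  next
    case False
    then have F: "\<not> s \<le> w * real 0" by simp
    show ?thesis
    proof (cases "w * real tau \<le> s")
      case True
      then have "w * real tau \<le> w * real (Suc l)" using s2 by linarith
      then have "tau \<le> Suc l" using w by simp
      then have tl: "tau = Suc l" using l by simp
      then have "s = w * real (Suc l)" using True s2 by simp
      then have "s - w * real l = w" using wl by simp
      then have r1: "(s - w * real l) / w = 1" using w by simp
      have "traj1 (\<lambda>i. w * real i) tau p s = p tau" unfolding traj1_def using F True by simp
      then show ?thesis using r1 tl by simp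
    next
      case True2: False
      define i where "i = (THE i. i < tau \<and> w * real i \<le> s \<and> s < w * real (Suc i))"
      have L: "traj1 (\<lambda>i. w * real i) tau p s = p i + (s - w * real i) / (w * real (Suc i) - w * real i) * (p (Suc i) - p i)"
        unfolding traj1_def Let_def i_def using F True2 by simp
      have wi: "w * real (Suc i) - w * real i = w" by (simp add: algebra_simps)
      show ?thesis
      proof (cases "s < w * real (Suc l)")
        case True
        have "i = l" unfolding i_def
        proof (rule the_equality)
          show "l < tau \<and> w * real l \<le> s \<and> s < w * real (Suc l)" using l s1 True by simp
        next
          fix i assume i: "i < tau \<and> w * real i \<le> s \<and> s < w * real (Suc i)"
          then have "w * real i < w * real (Suc l)" "w * real l < w * real (Suc i)" using s1 True by linarith+
          then have "i < Suc l" "l < Suc i" using w by simp_all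
          then show "i = l" by simp
        qed
        then show ?thesis using L wi by simp
      next
        case False3: False
        then have seq: "s = w * real (Suc l)" using s2 by simp
        then have "w * real (Suc l) < w * real tau" using True2 by linarith
        then have "Suc l < tau" using w by simp
        have "i = Suc l" unfolding i_def
        proof (rule the_equality)
          show "Suc l < tau \<and> w * real (Suc l) \<le> s \<and> s < w * real (Suc (Suc l))" using \<open>Suc l < tau\<close> seq w by simp
        next
          fix i assume i: "i < tau \<and> w * real i \<le> s \<and> s < w * real (Suc i)"
          then have "w * real i \<le> w * real (Suc l)" "w * real (Suc l) < w * real (Suc i)" using seq by linarith+
          then have "i \<le> Suc l" "Suc l < Suc i" using w by simp_all
          then show "i = Suc l" by simp
        qed
        then have "traj1 (\<lambda>i. w * real i) tau p s = p (Suc l)" using L seq by simp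
        moreover have "s - w * real l = w" using seq wl by simp
        then have "(s - w * real l) / w = 1" using w by simp
        ultimately show ?thesis by simp
      qed
    qed
  qed
qed

lemma finite_components_Union:
  assumes "finite F" "\<And>A. A \<in> F \<Longrightarrow> connected A" "S = \<Union>F"
  shows "finite (components S)"
proof -
  have "components S \<subseteq> (\<lambda>A. connected_component_set S (SOME a. a \<in> A)) ` F"
  proof
    fix K assume K: "K \<in> components S"
    then obtain x where x: "x \<in> S" "K = connected_component_set S x" by (auto simp: components_iff)
    then obtain A where A: "A \<in> F" "x \<in> A" using assms(3) by blast
    have AS: "A \<subseteq> S" using A assms(3) by blast
    have "A \<subseteq> K" using connected_component_maximal[OF A(2) assms(2)[OF A(1)] AS] x by simp
    moreover have "(SOME a. a \<in> A) \<in> A" using A(2) by (rule someI)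
    ultimately have "connected_component_set S (SOME a. a \<in> A) = K"
      using x by (metis connected_component_eq mem_Collect_eq subsetD)
    then show "K \<in> (\<lambda>A. connected_component_set S (SOME a. a \<in> A)) ` F" using A(1) by blast
  qed
  then show ?thesis using assms(1) finite_subset by blast
qed




locale cst =
  fixes k m tau :: nat
  assumes k1: "1 \<le> k" and m1: "1 \<le> m" and tau1: "1 \<le> tau"
begin

definition "W = 3*k*m + 2"
definition "w = real W"
definition "TT i = w * real i"
definition "g l = (if even l then 0 else w)"
definition "H s = traj1 TT tau g s"
definition "base x = (if x < k then 3 * real x else - 2 - 3 * real k * real (x - k))"
definition "mv x = (if x < k then 0 else 1::real)"
definition "pos x s = base x + mv x * H s"
definition "e = (axis 1 1 :: real^2)"
definition "PP x l = (base x + mv x * g l) *\<^sub>R e"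

lemma W_ge: "W \<ge> 5"
proof -
  have "1 \<le> k*m" using k1 m1 by (metis mult_le_mono nat_mult_1)
  then have "3 \<le> 3*k*m" by (simp add: mult.assoc)
  then show ?thesis unfolding W_def by linarith
qed
lemma w_pos: "w > 0" unfolding w_def using W_ge by simp

lemma H_seg:
  assumes "l < tau" "w * real l \<le> s" "s \<le> w * real (Suc l)"
  shows "H s = (if even l then s - w * real l else w - (s - w * real l))"
proof -
  have "H s = g l + (s - w * real l) / w * (g (Suc l) - g l)"
    unfolding H_def TT_def using traj1_seg[OF w_pos assms] by simp
  moreover have "g l + (s - w * real l) / w * (g (Suc l) - g l) = (if even l then s - w * real l else w - (s - w * real l))"
    using w_pos unfolding g_def by (auto simp: field_simps)
  ultimately show ?thesis by simp
qed

lemma H_lo: "s \<le> 0 \<Longrightarrow> H s = 0"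
proof -
  assume "s \<le> 0"
  then have "s \<le> TT 0" by (simp add: TT_def)
  then show "H s = 0" unfolding H_def traj1_def by (simp add: g_def)
qed

lemma H_hi: "w * real tau \<le> s \<Longrightarrow> H s = g tau"
proof -
  assume a: "w * real tau \<le> s"
  have "w * real tau > 0" using w_pos tau1 by simp
  then have "\<not> s \<le> 0" using a by linarith
  then show ?thesis unfolding H_def traj1_def TT_def using a by simp
qed

lemma H_unit:
  assumes "q < W * tau"
  shows "\<exists>\<sigma> a. (\<sigma> = 1 \<or> \<sigma> = -1) \<and> H (real q) = real a \<and> a \<le> W \<and>
     (\<forall>s. real q \<le> s \<and> s \<le> real q + 1 \<longrightarrow> H s = H (real q) + \<sigma> * (s - real q))"
proof -
  define l where "l = q div W"
  define r where "r = q mod W"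
  have Wp: "W > 0" using W_ge by simp
  have q: "q = W * l + r" unfolding l_def r_def by simp
  have r: "r < W" unfolding r_def using Wp by simp
  have l: "l < tau" using assms q
    by (metis add_lessD1 mult_less_cancel1 zero_less_iff_neq_zero) 
  have rq: "real q = w * real l + real r" unfolding q w_def by simp
  have seg: "\<And>s. real q \<le> s \<Longrightarrow> s \<le> real q + 1 \<Longrightarrow> w * real l \<le> s \<and> s \<le> w * real (Suc l)"
  proof -
    fix s assume "real q \<le> s" "s \<le> real q + 1"
    moreover have "real r + 1 \<le> w" using r unfolding w_def by simp
    moreover have "w * real (Suc l) = w * real l + w" by (simp add: algebra_simps)
    ultimately show "w * real l \<le> s \<and> s \<le> w * real (Suc l)" unfolding rq by linarith
  qed
  have Hq: "H (real q) = (if even l then real r else w - real r)"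
    using H_seg[OF l] seg[of "real q"] rq by simp
  have Hs: "H s = (if even l then s - w * real l else w - (s - w * real l))"
    if "real q \<le> s" "s \<le> real q + 1" for s
    using H_seg[OF l] seg[OF that] by blast
  show ?thesis
  proof (cases "even l")
    case True
    have "\<forall>s. real q \<le> s \<and> s \<le> real q + 1 \<longrightarrow> H s = H (real q) + 1 * (s - real q)"
    proof (intro allI impI)
      fix s assume "real q \<le> s \<and> s \<le> real q + 1"
      then have "H s = s - w * real l" using Hs True by simp
      have "H (real q) = real r" using Hq True by simp
      then have "H (real q) + 1 * (s - real q) = real r + (s - real q)" by simp
      also have "\<dots> = s - w * real l" using rq by simp
      finally show "H s = H (real q) + 1 * (s - real q)" using \<open>H s = s - w * real l\<close> by simp
    qed
    moreover have "H (real q) = real r" using Hq True by simp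
    ultimately show ?thesis using r by (intro exI[of _ 1] exI[of _ r]) simp
  next
    case False
    have "\<forall>s. real q \<le> s \<and> s \<le> real q + 1 \<longrightarrow> H s = H (real q) + (-1) * (s - real q)"
    proof (intro allI impI)
      fix s assume "real q \<le> s \<and> s \<le> real q + 1"
      then have "H s = w - (s - w * real l)" using Hs False by simp
      have "H (real q) = w - real r" using Hq False by simp
      then have "H (real q) + (-1) * (s - real q) = w - real r - (s - real q)" by simp
      also have "\<dots> = w - (s - w * real l)" using rq by simp
      finally show "H s = H (real q) + (-1) * (s - real q)" using \<open>H s = w - (s - w * real l)\<close> by simp
    qed
    moreover have "H (real q) = real (W - r)" using Hq False r by (simp add: w_def of_nat_diff)
    ultimately show ?thesis using r by (intro exI[of _ "-1"] exI[of _ "W - r"]) simp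
  qed
qed
lemma H_mid:
  assumes "0 < q" "q < W * tau" "q mod W \<noteq> 0"
  shows "\<exists>\<sigma>. (\<sigma> = 1 \<or> \<sigma> = -1) \<and>
     (\<forall>s. \<bar>s - real q\<bar> \<le> 1 \<longrightarrow> H s = H (real q) + \<sigma> * (s - real q))"
proof -
  define l where "l = q div W"
  define r where "r = q mod W"
  have Wp: "W > 0" using W_ge by simp
  have q: "q = W * l + r" unfolding l_def r_def by simp
  have r: "r < W" "r \<ge> 1" unfolding r_def using Wp assms by auto
  have l: "l < tau" using assms q
    by (metis add_lessD1 mult_less_cancel1 zero_less_iff_neq_zero) 
  have rq: "real q = w * real l + real r" unfolding q w_def by simp
  have seg: "\<And>s. \<bar>s - real q\<bar> \<le> 1 \<Longrightarrow> w * real l \<le> s \<and> s \<le> w * real (Suc l)"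
  proof -
    fix s assume "\<bar>s - real q\<bar> \<le> 1"
    moreover have "real r + 1 \<le> w" using r unfolding w_def by simp
    moreover have "real r \<ge> 1" using r by simp
    moreover have "w * real (Suc l) = w * real l + w" by (simp add: algebra_simps)
    ultimately show "w * real l \<le> s \<and> s \<le> w * real (Suc l)" unfolding rq abs_le_iff by linarith
  qed
  have Hq: "H (real q) = (if even l then real r else w - real r)"
    using H_seg[OF l] seg[of "real q"] rq by simp
  have Hs: "H s = (if even l then s - w * real l else w - (s - w * real l))"
    if "\<bar>s - real q\<bar> \<le> 1" for s
    using H_seg[OF l] seg[OF that] by blast
  show ?thesis
  proof (cases "even l")
    case True
    have "\<forall>s. \<bar>s - real q\<bar> \<le> 1 \<longrightarrow> H s = H (real q) + 1 * (s - real q)"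
    proof (intro allI impI)
      fix s assume a: "\<bar>s - real q\<bar> \<le> 1"
      have "H s = s - w * real l" using Hs[OF a] True by simp
      have "H (real q) = real r" using Hq True by simp
      then have "H (real q) + 1 * (s - real q) = real r + (s - real q)" by simp
      also have "\<dots> = s - w * real l" using rq by simp
      finally show "H s = H (real q) + 1 * (s - real q)" using \<open>H s = s - w * real l\<close> by simp
    qed
    then show ?thesis by blast
  next
    case False
    have "\<forall>s. \<bar>s - real q\<bar> \<le> 1 \<longrightarrow> H s = H (real q) + (-1) * (s - real q)"
    proof (intro allI impI)
      fix s assume a: "\<bar>s - real q\<bar> \<le> 1"
      have "H s = w - (s - w * real l)" using Hs[OF a] False by simp
      have "H (real q) = w - real r" using Hq False by simp
      then have "H (real q) + (-1) * (s - real q) = w - real r - (s - real q)" by simp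
      also have "\<dots> = w - (s - w * real l)" using rq by simp
      finally show "H s = H (real q) + (-1) * (s - real q)" using \<open>H s = w - (s - w * real l)\<close> by simp
    qed
    then show ?thesis by blast
  qed
qed

lemma H_bdry:
  assumes "q \<le> W * tau" "q mod W = 0"
  shows "H (real q) = 0 \<or> H (real q) = w"
proof -
  obtain l where q: "q = W * l" using assms(2) by auto
  have Wp: "W > 0" using W_ge by simp
  have "l \<le> tau" using assms(1) q Wp by simp
  show ?thesis
  proof (cases "l < tau")
    case True
    then show ?thesis using H_seg[OF True, of "real q"] q w_pos by (simp add: w_def)
  next
    case False
    then have "l = tau" using \<open>l \<le> tau\<close> by simp
    then show ?thesis using H_hi[of "real q"] q by (simp add: w_def g_def)
  qed
qed

lemma H_int:
  assumes "q \<le> W * tau"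
  shows "\<exists>a::nat. H (real q) = real a \<and> a \<le> W"
proof (cases "q < W * tau")
  case True then show ?thesis using H_unit by blast
next
  case False
  then have "q = W * tau" using assms by simp
  then have "q mod W = 0" by simp
  then have "H (real q) = 0 \<or> H (real q) = w" by (rule H_bdry[OF assms])
  then show ?thesis unfolding w_def by (metis of_nat_0 le0 order_refl)
qed

lemma H_lip:
  assumes "q \<le> W * tau" "\<bar>s - real q\<bar> \<le> 1"
  shows "\<bar>H s - H (real q)\<bar> \<le> \<bar>s - real q\<bar>"
proof (cases "s \<le> real q")
  case True
  show ?thesis
  proof (cases "q = 0")
    case True
    then show ?thesis using \<open>s \<le> real q\<close> H_lo by simp
  next
    case False
    then have q1: "q - 1 < W * tau" using assms by simp
    have rq: "real (q - 1) = real q - 1" using False by (simp add: of_nat_diff)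
    obtain \<sigma> a where sg: "\<sigma> = 1 \<or> \<sigma> = -1"
      and Hf: "\<forall>s. real (q-1) \<le> s \<and> s \<le> real (q-1) + 1 \<longrightarrow> H s = H (real (q-1)) + \<sigma> * (s - real (q-1))"
      using H_unit[OF q1] by blast
    have "real (q-1) \<le> s" using assms(2) rq unfolding abs_le_iff by linarith
    moreover have "s \<le> real (q-1) + 1" using True rq by linarith
    ultimately have "H s = H (real (q-1)) + \<sigma> * (s - real (q-1))" using Hf by blast
    moreover have "real (q-1) \<le> real q \<and> real q \<le> real (q-1) + 1" using rq by linarith
    then have "H (real q) = H (real (q-1)) + \<sigma> * (real q - real (q-1))" using Hf by blast
    ultimately have "H s - H (real q) = \<sigma> * (s - real q)" by (simp add: algebra_simps)
    then show ?thesis using sg by (auto simp: abs_mult)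
  qed
next
  case False
  show ?thesis
  proof (cases "q = W * tau")
    case True
    then show ?thesis using False H_hi[of s] H_hi[of "real q"] by (simp add: w_def)
  next
    case False2: False
    then have q1: "q < W * tau" using assms by simp
    obtain \<sigma> a where sg: "\<sigma> = 1 \<or> \<sigma> = -1"
      and Hf: "\<forall>s. real q \<le> s \<and> s \<le> real q + 1 \<longrightarrow> H s = H (real q) + \<sigma> * (s - real q)"
      using H_unit[OF q1] by blast
    have "s \<le> real q + 1" using assms(2) unfolding abs_le_iff by linarith
    moreover have "real q \<le> s" using False by linarith
    ultimately have "H s = H (real q) + \<sigma> * (s - real q)" using Hf by blast
    then show ?thesis using sg by (auto simp: abs_mult)
  qed
qed

end



lemma nat_dist1: "(x::nat) \<noteq> z \<Longrightarrow> 1 \<le> \<bar>real x - real z\<bar>"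
  by (cases "x < z") auto

lemma box_up:
  fixes a c :: int and t :: real
  assumes "0 < t" "t < 1"
  shows "\<bar>of_int a + t - of_int c\<bar> \<le> 1 \<longleftrightarrow> c - 1 \<le> a \<and> a \<le> c"
proof
  assume h: "\<bar>of_int a + t - of_int c\<bar> \<le> 1"
  then have "real_of_int (c - 2) < of_int a" using assms by (simp add: abs_le_iff)
  then have "c - 2 < a" by (simp only: of_int_less_iff)
  moreover have "real_of_int a < of_int (c + 1)" using h assms by (simp add: abs_le_iff)
  then have "a < c + 1" by (simp only: of_int_less_iff)
  ultimately show "c - 1 \<le> a \<and> a \<le> c" by simp
next
  assume h: "c - 1 \<le> a \<and> a \<le> c"
  then have "real_of_int (c - 1) \<le> of_int a" "real_of_int a \<le> of_int c" by (simp_all only: of_int_le_iff)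
  then show "\<bar>of_int a + t - of_int c\<bar> \<le> 1" using assms by (simp add: abs_le_iff)
qed

lemma box_down:
  fixes a c :: int and t :: real
  assumes "0 < t" "t < 1"
  shows "\<bar>of_int a - t - of_int c\<bar> \<le> 1 \<longleftrightarrow> c \<le> a \<and> a \<le> c + 1"
proof
  assume h: "\<bar>of_int a - t - of_int c\<bar> \<le> 1"
  then have "real_of_int (c - 1) < of_int a" using assms by (simp add: abs_le_iff)
  then have "c - 1 < a" by (simp only: of_int_less_iff)
  moreover have "real_of_int a < of_int (c + 2)" using h assms by (simp add: abs_le_iff)
  then have "a < c + 2" by (simp only: of_int_less_iff)
  ultimately show "c \<le> a \<and> a \<le> c + 1" by simp
next
  assume h: "c \<le> a \<and> a \<le> c + 1"
  then have "real_of_int c \<le> of_int a" "real_of_int a \<le> of_int (c + 1)" by (simp_all only: of_int_le_iff)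
  then show "\<bar>of_int a - t - of_int c\<bar> \<le> 1" using assms by (simp add: abs_le_iff)
qed

context cst
begin

abbreviation "D x y s \<equiv> dconn tau TT PP (1/2) x y s"
abbreviation "CR s \<equiv> conn_rel (k+m) tau TT PP (1/2) s"
abbreviation "CP s \<equiv> comps (k+m) tau TT PP (1/2) s"

lemma traj_PP: "traj TT tau (PP x) s = pos x s *\<^sub>R e"
proof -
  have eq: "PP x = (\<lambda>l. (base x + mv x * g l) *\<^sub>R e)" by (rule ext) (simp add: PP_def)
  show ?thesis by (subst eq) (simp add: traj_lin traj1_aff pos_def H_def)
qed

lemma norm_e: "norm e = 1" unfolding e_def by simp

lemma D_iff: "D x y s \<longleftrightarrow> \<bar>pos x s - pos y s\<bar> \<le> 1"
proof -
  have "dist (pos x s *\<^sub>R e) (pos y s *\<^sub>R e) = \<bar>pos x s - pos y s\<bar>"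
    unfolding dist_norm by (simp add: scaleR_diff_left[symmetric] norm_e)
  then show ?thesis unfolding dconn_def traj_PP by (simp add: norm_e)
qed

lemma sep:
  assumes "x \<noteq> z" "(x < k) = (z < k)"
  shows "3 \<le> \<bar>pos x s - pos z s\<bar>"
proof (cases "x < k")
  case True
  then have "z < k" using assms by simp
  have "pos x s - pos z s = 3 * (real x - real z)" using True \<open>z < k\<close> by (simp add: pos_def base_def mv_def)
  then show ?thesis using nat_dist1[OF assms(1)] by (simp add: abs_mult)
next
  case False
  then have z: "\<not> z < k" using assms by simp
  have "x - k \<noteq> z - k" using assms False z by simp
  have "pos x s - pos z s = 3 * real k * (real (z - k) - real (x - k))" using False z
    by (simp add: pos_def base_def mv_def algebra_simps)
  moreover have "1 \<le> \<bar>real (z - k) - real (x - k)\<bar>" using nat_dist1[OF \<open>x - k \<noteq> z - k\<close>] by simp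
  moreover have "1 \<le> real k" using k1 by simp
  ultimately have "3 * 1 * 1 \<le> 3 * real k * \<bar>real (z - k) - real (x - k)\<bar>"
    by (intro mult_mono) auto
  then show ?thesis using \<open>pos x s - pos z s = _\<close> \<open>1 \<le> real k\<close> by (simp add: abs_mult)
qed

lemma D_refl: "D x x s" unfolding D_iff by simp

lemma D_sym: "D x y s = D y x s" unfolding D_iff by (simp add: abs_minus_commute)

lemma D_same: "x \<noteq> z \<Longrightarrow> (x < k) = (z < k) \<Longrightarrow> \<not> D x z s"
  using sep[of x z s] unfolding D_iff by linarith

lemma D_trans:
  assumes "D x y s" "D y z s"
  shows "D x z s"
proof (cases "x = z")
  case True then show ?thesis by (simp add: D_refl)
next
  case False
  show ?thesis
  proof (cases "x = y \<or> y = z")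
    case True then show ?thesis using assms by auto
  next
    case False2: False
    show ?thesis
    proof (cases "(x < k) = (z < k)")
      case True
      have "3 \<le> \<bar>pos x s - pos z s\<bar>" using sep[OF \<open>x \<noteq> z\<close> True] .
      moreover have "\<bar>pos x s - pos y s\<bar> \<le> 1" "\<bar>pos y s - pos z s\<bar> \<le> 1" using assms unfolding D_iff by auto
      ultimately show ?thesis by linarith
    next
      case False3: False
      have "(x < k) = (y < k) \<or> (y < k) = (z < k)" using False3 by auto
      then show ?thesis using D_same assms False2 by blast
    qed
  qed
qed

lemma CR_trans: "trans (CR s)"
  unfolding trans_def conn_rel_def using D_trans by blast

lemma rt_iff:
  assumes "x < k + m" "y < k + m"
  shows "(x, y) \<in> (CR s)\<^sup>* \<longleftrightarrow> D x y s"
proof -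
  have "(CR s)\<^sup>* = (CR s)\<^sup>=" using CR_trans by (simp add: rtrancl_trancl_reflcl)
  then show ?thesis using assms D_refl unfolding conn_rel_def by auto
qed

lemma rt_cases:
  assumes "(x, y) \<in> (CR s)\<^sup>*"
  shows "x = y \<or> (x < k + m \<and> y < k + m \<and> D x y s)"
proof -
  have "(CR s)\<^sup>* = (CR s)\<^sup>=" using CR_trans by (simp add: rtrancl_trancl_reflcl)
  then show ?thesis using assms unfolding conn_rel_def by auto
qed

lemma together:
  assumes "x < k + m" "y < k + m"
  shows "(\<exists>X\<in>CP s. x \<in> X \<and> y \<in> X) \<longleftrightarrow> D x y s"
proof
  assume "\<exists>X\<in>CP s. x \<in> X \<and> y \<in> X"
  then obtain X where X: "X \<in> CP s" "x \<in> X" "y \<in> X" by blast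
  then obtain z where z: "X = (CR s)\<^sup>* `` {z}" "z < k + m" unfolding comps_def by (auto elim: quotientE)
  have "(z, x) \<in> (CR s)\<^sup>*" "(z, y) \<in> (CR s)\<^sup>*" using X z by auto
  then have "D z x s" "D z y s" using rt_iff z assms by auto
  then show "D x y s" using D_sym D_trans by blast
next
  assume "D x y s"
  have "(CR s)\<^sup>* `` {x} \<in> CP s" unfolding comps_def by (rule quotientI) (use assms in simp)
  moreover have "x \<in> (CR s)\<^sup>* `` {x}" by simp
  moreover have "y \<in> (CR s)\<^sup>* `` {x}" using rt_iff assms \<open>D x y s\<close> by simp
  ultimately show "\<exists>X\<in>CP s. x \<in> X \<and> y \<in> X" by blast
qed

lemma pair_comp:
  assumes "x < k + m" "y < k + m" "x \<noteq> y"
  shows "{x, y} \<in> CP s \<longleftrightarrow> D x y s"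
proof
  assume "{x, y} \<in> CP s"
  then show "D x y s" using together[OF assms(1,2)] by blast
next
  assume d: "D x y s"
  have "(CR s)\<^sup>* `` {x} = {x, y}"
  proof
    show "(CR s)\<^sup>* `` {x} \<subseteq> {x, y}"
    proof
      fix z assume "z \<in> (CR s)\<^sup>* `` {x}"
      then have "x = z \<or> (x < k + m \<and> z < k + m \<and> D x z s)" using rt_cases by auto
      then show "z \<in> {x, y}"
      proof
        assume h: "x < k + m \<and> z < k + m \<and> D x z s"
        show "z \<in> {x, y}"
        proof (rule ccontr)
          assume "z \<notin> {x, y}"
          then have "D y z s" using h d D_sym D_trans by blast
          have zx: "z \<noteq> x" "z \<noteq> y" using \<open>z \<notin> {x, y}\<close> by auto
          have "(x < k) = (y < k) \<or> (x < k) = (z < k) \<or> (y < k) = (z < k)" by auto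
          moreover have "(x < k) = (y < k) \<Longrightarrow> False" using D_same[OF assms(3)] d by blast
          moreover have "(x < k) = (z < k) \<Longrightarrow> False" using D_same[of x z] zx h by metis
          moreover have "(y < k) = (z < k) \<Longrightarrow> False" using D_same[of y z] zx \<open>D y z s\<close> by metis
          ultimately show False by blast
        qed
      qed auto
    qed
  next
    have "(x, y) \<in> (CR s)\<^sup>*" using rt_iff[OF assms(1,2)] d by blast
    then show "{x, y} \<subseteq> (CR s)\<^sup>* `` {x}" by blast
  qed
  moreover have "(CR s)\<^sup>* `` {x} \<in> CP s" unfolding comps_def by (rule quotientI) (use assms in simp)
  ultimately show "{x, y} \<in> CP s" by simp
qed

lemma CP_eq:
  assumes "\<And>x y. x < k + m \<Longrightarrow> y < k + m \<Longrightarrow> D x y s = D x y s'"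
  shows "CP s = CP s'"
proof -
  have "CR s = CR s'" unfolding conn_rel_def using assms by auto
  then show ?thesis unfolding comps_def by simp
qed

definition "cpr x y = (if x < k then 3 * (x + k * (y - k)) + 2 else 3 * (y + k * (x - k)) + 2)"

lemma D_char:
  assumes "x < k + m" "y < k + m" "x \<noteq> y"
  shows "D x y s \<longleftrightarrow> (x < k) \<noteq> (y < k) \<and> \<bar>H s - real (cpr x y)\<bar> \<le> 1"
proof (cases "(x < k) = (y < k)")
  case True then show ?thesis using D_same assms by simp
next
  case False
  show ?thesis
  proof (cases "x < k")
    case True
    then have "\<not> y < k" using False by simp
    then obtain i where yi: "y = k + i" by (metis le_add_diff_inverse not_less)
    have "pos x s - pos y s = real (cpr x y) - H s" using True yi
      by (simp add: pos_def base_def mv_def cpr_def algebra_simps)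
    then show ?thesis unfolding D_iff using False by (simp add: abs_minus_commute)
  next
    case F: False
    then have "y < k" using False by simp
    obtain i where xi: "x = k + i" using F by (metis le_add_diff_inverse not_less)
    have "pos x s - pos y s = H s - real (cpr x y)" using xi \<open>y < k\<close>
      by (simp add: pos_def base_def mv_def cpr_def algebra_simps)
    then show ?thesis unfolding D_iff using False by simp
  qed
qed

lemma cpr_bounds:
  assumes "x < k + m" "y < k + m" "(x < k) \<noteq> (y < k)"
  shows "2 \<le> cpr x y" "cpr x y + 3 \<le> W"
proof -
  obtain j i where ji: "j < k" "i < m" "cpr x y = 3 * (j + k * i) + 2"
  proof (cases "x < k")
    case True
    then show ?thesis using that[of x "y - k"] assms by (auto simp: cpr_def)
  next
    case False
    then show ?thesis using that[of y "x - k"] assms by (auto simp: cpr_def)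
  qed
  have "j + k * i < k + k * i" using ji by simp
  also have "\<dots> = k * Suc i" by simp
  also have "\<dots> \<le> k * m" using ji by (intro mult_le_mono2) simp
  finally have "j + k * i < k * m" .
  then show "2 \<le> cpr x y" "cpr x y + 3 \<le> W" using ji unfolding W_def by auto
qed

lemma D_open:
  assumes q: "q < W * tau" and xy: "x < k + m" "y < k + m"
    and s1: "real q < s1" "s1 < real q + 1" and s2: "real q < s2" "s2 < real q + 1"
  shows "D x y s1 = D x y s2"
proof (cases "x = y")
  case True then show ?thesis by (simp add: D_refl)
next
  case False
  obtain \<sigma> a where sg: "\<sigma> = 1 \<or> \<sigma> = -1" and Ha: "H (real q) = real a"
    and Hf: "\<forall>s. real q \<le> s \<and> s \<le> real q + 1 \<longrightarrow> H s = H (real q) + \<sigma> * (s - real q)"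
    using H_unit[OF q] by blast
  define c where "c = cpr x y"
  have key: "\<And>s. real q < s \<Longrightarrow> s < real q + 1 \<Longrightarrow>
     (\<bar>H s - real c\<bar> \<le> 1) = (if \<sigma> = 1 then int c - 1 \<le> int a \<and> int a \<le> int c else int c \<le> int a \<and> int a \<le> int c + 1)"
  proof -
    fix s assume a1: "real q < s" "s < real q + 1"
    have Hs: "H s = real a + \<sigma> * (s - real q)" using Hf a1 Ha by simp
    show "(\<bar>H s - real c\<bar> \<le> 1) = (if \<sigma> = 1 then int c - 1 \<le> int a \<and> int a \<le> int c else int c \<le> int a \<and> int a \<le> int c + 1)"
    proof (cases "\<sigma> = 1")
      case True
      have eq: "H s - real c = real a + (s - real q) - real c" using Hs True by simp
      have b: "(\<bar>real a + (s - real q) - real c\<bar> \<le> 1) = (int c - 1 \<le> int a \<and> int a \<le> int c)"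
        using box_up[of "s - real q" "int a" "int c"] a1 by simp
      show ?thesis unfolding eq b using True by simp
    next
      case False
      then have "\<sigma> = -1" using sg by simp
      have eq: "H s - real c = real a - (s - real q) - real c" using Hs \<open>\<sigma> = -1\<close> by simp
      have b: "(\<bar>real a - (s - real q) - real c\<bar> \<le> 1) = (int c \<le> int a \<and> int a \<le> int c + 1)"
        using box_down[of "s - real q" "int a" "int c"] a1 by simp
      show ?thesis unfolding eq b using False by simp
    qed
  qed
  show ?thesis using D_char[OF xy False] key[OF s1] key[OF s2] unfolding c_def by simp
qed

end



context cst
begin

abbreviation "EV x y s \<equiv> event (k+m) tau TT PP (1/2) x y s"
abbreviation "CT s \<equiv> change_time (k+m) tau TT PP (1/2) s"

lemma TT0: "TT 0 = 0" by (simp add: TT_def)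
lemma TTtau: "TT tau = real (W * tau)" by (simp add: TT_def w_def)

lemma floor_ex:
  assumes "0 \<le> s"
  shows "\<exists>q :: nat. real q \<le> s \<and> s < real q + 1"
proof -
  define q where "q = nat \<lfloor>s\<rfloor>"
  have "real q = of_int \<lfloor>s\<rfloor>" using assms unfolding q_def by simp
  then have "real q \<le> s" "s < real q + 1" by linarith+
  then show ?thesis by blast
qed

lemma CP_open:
  assumes q: "q < W * tau" and s1: "real q < s1" "s1 < real q + 1" and s2: "real q < s2" "s2 < real q + 1"
  shows "CP s1 = CP s2"
  using D_open[OF q _ _ s1 s2] by (intro CP_eq) blast

lemma CT_int:
  assumes "CT s" "0 < s" "s < real (W * tau)"
  shows "\<exists>q. s = real q \<and> q < W * tau"
proof (rule ccontr)
  assume no: "\<not> (\<exists>q. s = real q \<and> q < W * tau)"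
  have "0 \<le> s" using assms(2) by simp
  then obtain q :: nat where q0: "real q \<le> s" "s < real q + 1" using floor_ex by blast
  show False
  proof (cases "s = real q")
    case 1: True
    have "q < W * tau" using assms(3) unfolding 1 of_nat_less_iff .
    then show False using no 1 by blast
  next
    case False
    then have 2: "real q < s" "s < real q + 1" using q0 by auto
    then have "real q < real (W * tau)" using assms(3) by linarith
    then have q: "q < W * tau" by (simp only: of_nat_less_iff)
    define \<delta> where "\<delta> = min (s - real q) (real q + 1 - s)"
    have "\<delta> > 0" using 2 unfolding \<delta>_def by simp
    moreover have "\<forall>s'. \<bar>s' - s\<bar> < \<delta> \<longrightarrow> CP s' = CP s"
    proof (intro allI impI)
      fix s' assume "\<bar>s' - s\<bar> < \<delta>"
      then have "real q < s'" "s' < real q + 1" unfolding \<delta>_def by (simp_all add: abs_less_iff)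
      then show "CP s' = CP s" using CP_open[OF q _ _ 2] by blast
    qed
    ultimately show False using assms(1) unfolding change_time_def by blast
  qed
qed

lemma CT_finite: "finite {s. TT 0 < s \<and> s < TT tau \<and> CT s}"
proof -
  have "{s. TT 0 < s \<and> s < TT tau \<and> CT s} \<subseteq> real ` {..<W * tau}"
  proof
    fix s assume "s \<in> {s. TT 0 < s \<and> s < TT tau \<and> CT s}"
    then have "CT s" "0 < s" "s < real (W * tau)" using TT0 TTtau by auto
    then show "s \<in> real ` {..<W * tau}" using CT_int by blast
  qed
  then show ?thesis by (rule finite_subset) simp
qed

lemma EV_loc:
  assumes "EV x y s"
  shows "\<not> (\<exists>\<delta>>0. \<forall>s'. \<bar>s' - s\<bar> < \<delta> \<longrightarrow> D x y s' = D x y s)"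
proof
  assume "\<exists>\<delta>>0. \<forall>s'. \<bar>s' - s\<bar> < \<delta> \<longrightarrow> D x y s' = D x y s"
  then obtain \<delta> where d: "\<delta> > 0" "\<forall>s'. \<bar>s' - s\<bar> < \<delta> \<longrightarrow> D x y s' = D x y s" by blast
  obtain s1 s2 where "\<bar>s1 - s\<bar> < \<delta>" "\<bar>s2 - s\<bar> < \<delta>" "D x y s1" "\<not> D x y s2"
    using assms d(1) unfolding event_def by blast
  then show False using d(2) by blast
qed

lemma EV_basic:
  assumes "EV x y s"
  shows "x < k + m" "y < k + m" "x \<noteq> y" "0 \<le> s" "s \<le> real (W * tau)"
  using assms TT0 TTtau unfolding event_def by auto

lemma EV_char:
  assumes ev: "EV x y s"
  shows "(x < k) \<noteq> (y < k) \<and> (\<exists>q. s = real q \<and> 0 < q \<and> q < W * tau \<and> q mod W \<noteq> 0 \<and>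
     (H s = real (cpr x y) - 1 \<or> H s = real (cpr x y) + 1))"
proof -
  note b = EV_basic[OF ev]
  note nl = EV_loc[OF ev]
  have mixed: "(x < k) \<noteq> (y < k)"
  proof
    assume "(x < k) = (y < k)"
    then have "\<forall>s'. \<bar>s' - s\<bar> < 1 \<longrightarrow> D x y s' = D x y s" using D_same[OF b(3)] by blast
    then show False using nl by (meson zero_less_one)
  qed
  define c where "c = cpr x y"
  have Dc: "\<And>s. D x y s = (\<bar>H s - real c\<bar> \<le> 1)" using D_char[OF b(1,2,3)] mixed unfolding c_def by simp
  have cb: "2 \<le> c" "c + 3 \<le> W" using cpr_bounds[OF b(1,2) mixed] unfolding c_def by auto
  obtain q :: nat where qs: "s = real q"
  proof -
    obtain q :: nat where q0: "real q \<le> s" "s < real q + 1" using floor_ex b(4) by blast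
    show ?thesis
    proof (cases "s = real q")
      case 1: True then show ?thesis using that by blast
    next
      case False
      then have 2: "real q < s" "s < real q + 1" using q0 by auto
      then have "real q < real (W * tau)" using b(5) by linarith
      then have q: "q < W * tau" by (simp only: of_nat_less_iff)
      define \<delta> where "\<delta> = min (s - real q) (real q + 1 - s)"
      have "\<delta> > 0" using 2 unfolding \<delta>_def by simp
      moreover have "\<forall>s'. \<bar>s' - s\<bar> < \<delta> \<longrightarrow> D x y s' = D x y s"
      proof (intro allI impI)
        fix s' assume "\<bar>s' - s\<bar> < \<delta>"
        then have "real q < s'" "s' < real q + 1" unfolding \<delta>_def by (simp_all add: abs_less_iff)
        then show "D x y s' = D x y s" using D_open[OF q b(1,2) _ _ 2] by blast
      qed
      ultimately show ?thesis using nl by blast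
    qed
  qed
  have qle: "q \<le> W * tau" using b(5) unfolding qs of_nat_le_iff .
  obtain a :: nat where Ha: "H (real q) = real a" "a \<le> W" using H_int[OF qle] by blast
  have lip: "\<And>s'. \<bar>s' - s\<bar> < 1 \<Longrightarrow> \<bar>H s' - real a\<bar> < 1"
  proof -
    fix s' assume "\<bar>s' - s\<bar> < 1"
    then have "\<bar>H s' - H (real q)\<bar> \<le> \<bar>s' - real q\<bar>" using H_lip[OF qle, of s'] qs by simp
    then show "\<bar>H s' - real a\<bar> < 1" using \<open>\<bar>s' - s\<bar> < 1\<close> qs Ha by simp
  qed
  have ac: "a = c + 1 \<or> a + 1 = c"
  proof (rule ccontr)
    assume nac: "\<not> (a = c + 1 \<or> a + 1 = c)"
    have "a = c \<or> c + 2 \<le> a \<or> a + 2 \<le> c" using nac by linarith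
    then have "\<forall>s'. \<bar>s' - s\<bar> < 1 \<longrightarrow> D x y s' = D x y s"
    proof
      assume "a = c"
      then have "\<And>s'. \<bar>s' - s\<bar> < 1 \<Longrightarrow> D x y s'" using lip Dc by force
      then show ?thesis by simp
    next
      assume "c + 2 \<le> a \<or> a + 2 \<le> c"
      then have "2 \<le> \<bar>real a - real c\<bar>" by auto
      then have "\<And>s'. \<bar>s' - s\<bar> < 1 \<Longrightarrow> \<not> D x y s'" using lip Dc
        by (smt (verit, best))
      then show ?thesis by simp
    qed
    then show False using nl by (meson zero_less_one)
  qed
  then have Hs: "H s = real c - 1 \<or> H s = real c + 1" using Ha qs cb by auto
  have "H (real q) \<noteq> 0 \<and> H (real q) \<noteq> w" using ac Ha cb unfolding w_def by auto
  then have qm: "q mod W \<noteq> 0" using H_bdry[OF qle] by blast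
  then have "0 < q" by (cases q) auto
  moreover have "q \<noteq> W * tau" using qm by auto
  then have "q < W * tau" using qle by simp
  ultimately show ?thesis using mixed qs qm Hs unfolding c_def by blast
qed

lemma sign_left:
  fixes \<sigma> d t :: real
  assumes "\<sigma> = 1 \<or> \<sigma> = -1" "d = 1 \<or> d = -1" "-1 < t" "t < 0"
  shows "(\<bar>d + \<sigma> * t\<bar> \<le> 1) = (\<sigma> * d = 1)"
  using assms by (elim disjE) (auto simp: abs_le_iff)

lemma sign_right:
  fixes \<sigma> d t :: real
  assumes "\<sigma> = 1 \<or> \<sigma> = -1" "d = 1 \<or> d = -1" "0 < t" "t < 1"
  shows "(\<bar>d + \<sigma> * t\<bar> \<le> 1) = (\<not> \<sigma> * d = 1)"
  using assms by (elim disjE) (auto simp: abs_le_iff)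

lemma GP_clean:
  assumes ev: "EV x y s"
  shows "\<exists>\<delta>>0. \<exists>b. (\<forall>s'. s - \<delta> < s' \<and> s' < s \<longrightarrow> D x y s' = b) \<and>
                   (\<forall>s'. s < s' \<and> s' < s + \<delta> \<longrightarrow> D x y s' = (\<not> b))"
proof -
  note b = EV_basic[OF ev]
  obtain q where mixed: "(x < k) \<noteq> (y < k)" and qs: "s = real q" "0 < q" "q < W * tau" "q mod W \<noteq> 0"
    and Hs: "H s = real (cpr x y) - 1 \<or> H s = real (cpr x y) + 1"
    using EV_char[OF ev] by blast
  define c where "c = cpr x y"
  have Dc: "\<And>s. D x y s = (\<bar>H s - real c\<bar> \<le> 1)" using D_char[OF b(1,2,3)] mixed unfolding c_def by simp
  obtain \<sigma> where sg: "\<sigma> = 1 \<or> \<sigma> = -1" and Hf: "\<forall>s'. \<bar>s' - real q\<bar> \<le> 1 \<longrightarrow> H s' = H (real q) + \<sigma> * (s' - real q)"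
    using H_mid[OF qs(2,3,4)] by blast
  obtain d where dd: "d = 1 \<or> d = -1" "H s = real c + d" using Hs unfolding c_def by auto
  have L: "\<forall>s'. s - 1 < s' \<and> s' < s \<longrightarrow> D x y s' = (\<sigma> * d = 1)"
  proof (intro allI impI)
    fix s' assume a: "s - 1 < s' \<and> s' < s"
    then have "\<bar>s' - real q\<bar> \<le> 1" using qs unfolding abs_le_iff by linarith
    then have "H s' = H (real q) + \<sigma> * (s' - real q)" using Hf by blast
    then have "H s' - real c = d + \<sigma> * (s' - s)" using dd qs by simp
    then show "D x y s' = (\<sigma> * d = 1)" unfolding Dc using sign_left[OF sg dd(1), of "s' - s"] a by simp
  qed
  have R: "\<forall>s'. s < s' \<and> s' < s + 1 \<longrightarrow> D x y s' = (\<not> (\<sigma> * d = 1))"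
  proof (intro allI impI)
    fix s' assume a: "s < s' \<and> s' < s + 1"
    then have "\<bar>s' - real q\<bar> \<le> 1" using qs unfolding abs_le_iff by linarith
    then have "H s' = H (real q) + \<sigma> * (s' - real q)" using Hf by blast
    then have "H s' - real c = d + \<sigma> * (s' - s)" using dd qs by simp
    then show "D x y s' = (\<not> (\<sigma> * d = 1))" unfolding Dc using sign_right[OF sg dd(1), of "s' - s"] a by simp
  qed
  show ?thesis using L R zero_less_one by blast
qed

lemma GP_distinct:
  assumes ev1: "EV x y s" and ev2: "EV x' y' s"
  shows "{x, y} = {x', y'}"
proof -
  note b1 = EV_basic[OF ev1] and b2 = EV_basic[OF ev2]
  obtain q where m1: "(x < k) \<noteq> (y < k)" and H1: "H s = real (cpr x y) - 1 \<or> H s = real (cpr x y) + 1"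
    using EV_char[OF ev1] by blast
  obtain q' where m2: "(x' < k) \<noteq> (y' < k)" and H2: "H s = real (cpr x' y') - 1 \<or> H s = real (cpr x' y') + 1"
    using EV_char[OF ev2] by blast
  define st where "st = (\<lambda>x y::nat. if x < k then x else y)"
  define mo where "mo = (\<lambda>x y::nat. if x < k then y else x)"
  have cp: "\<And>x y. cpr x y = 3 * (st x y + k * (mo x y - k)) + 2" unfolding cpr_def st_def mo_def by simp
  define c where "c = cpr x y"
  define c' where "c' = cpr x' y'"
  have "c = c' \<or> c = c' + 2 \<or> c + 2 = c'"
  proof -
    have "real c = real c' \<or> real c = real (c' + 2) \<or> real (c + 2) = real c'"
      using H1 H2 unfolding c_def c'_def by auto
    then show ?thesis by (simp only: of_nat_eq_iff)
  qed
  then have veq: "st x y + k * (mo x y - k) = st x' y' + k * (mo x' y' - k)"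
    unfolding c_def c'_def cp by presburger
  have k0: "k > 0" using k1 by simp
  have sk: "st x y < k" "st x' y' < k" using m1 m2 unfolding st_def by auto
  have "(st x y + k * (mo x y - k)) mod k = st x y" "(st x' y' + k * (mo x' y' - k)) mod k = st x' y'"
    using sk by simp_all
  then have e1: "st x y = st x' y'" using veq by simp
  have "(st x y + k * (mo x y - k)) div k = mo x y - k" "(st x' y' + k * (mo x' y' - k)) div k = mo x' y' - k"
    using sk k0 by simp_all
  then have e2: "mo x y - k = mo x' y' - k" using veq by simp
  note e1 e2
  moreover have "mo x y \<ge> k" "mo x' y' \<ge> k" using m1 m2 unfolding mo_def by auto
  ultimately have "st x y = st x' y'" "mo x y = mo x' y'" by auto
  moreover have "{x, y} = {st x y, mo x y}" "{x', y'} = {st x' y', mo x' y'}" unfolding st_def mo_def by auto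
  ultimately show ?thesis by simp
qed

end



context cst
begin

lemma GP: "general_position (k+m) tau TT PP (1/2)"
  unfolding general_position_def using GP_clean GP_distinct by blast

lemma TT_mono: "\<forall>i<tau. TT i < TT (Suc i)"
  using w_pos by (simp add: TT_def)

definition "cpij i j = 3 * (j + k * i) + 2"

lemma cpr_ij: "j < k \<Longrightarrow> cpr j (k + i) = cpij i j"
  by (simp add: cpr_def cpij_def)

lemma cpij_bounds:
  assumes "i < m" "j < k"
  shows "2 \<le> cpij i j" "cpij i j + 3 \<le> W"
proof -
  have a: "j < k + m" "k + i < k + m" "(j < k) \<noteq> (k + i < k)" using assms by auto
  show "2 \<le> cpij i j" "cpij i j + 3 \<le> W" using cpr_bounds[OF a] cpr_ij[OF assms(2)] by auto
qed

lemma Dc_ij: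
  assumes "i < m" "j < k"
  shows "D j (k + i) s = (\<bar>H s - real (cpij i j)\<bar> \<le> 1)"
proof -
  have a: "j < k + m" "k + i < k + m" "j \<noteq> k + i" using assms by auto
  show ?thesis using D_char[OF a] cpr_ij[OF assms(2)] assms by simp
qed

lemma j_lt: "i < m \<Longrightarrow> j < k \<Longrightarrow> j < k + m" by simp
lemma ki_lt: "i < m \<Longrightarrow> k + i < k + m" by simp

definition "uoff l i j = (if even l then cpij i j - 1 else W - (cpij i j - 1))"
definition "evt l i j = W * l + uoff l i j"

lemma uoff_bounds:
  assumes "i < m" "j < k"
  shows "1 \<le> uoff l i j" "uoff l i j < W"
  using cpij_bounds[OF assms] unfolding uoff_def by auto

lemma seg_l:
  assumes "l < tau" "u \<le> W"
  shows "w * real l \<le> w * real l + real u" "w * real l + real u \<le> w * real (Suc l)"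
  using assms w_pos by (auto simp: w_def algebra_simps)

lemma evt_real: "real (evt l i j) = w * real l + real (uoff l i j)"
  by (simp add: evt_def w_def)

lemma H_evt:
  assumes "l < tau" "i < m" "j < k" "0 \<le> t" "t \<le> 1/2"
  shows "H (if even l then real (evt l i j) - t else real (evt l i j) + t) = real (cpij i j) - 1 - t"
proof -
  note cb = cpij_bounds[OF assms(2,3)]
  note ub = uoff_bounds[OF assms(2,3)]
  show ?thesis
  proof (cases "even l")
    case True
    have u: "real (uoff l i j) = real (cpij i j) - 1" using True cb unfolding uoff_def by (simp add: of_nat_diff)
    have s1: "w * real l \<le> w * real l + real (uoff l i j) - t" using u cb assms by simp
    have "uoff l i j \<le> W" using ub(2)[of l] by simp
    then have "w * real l + real (uoff l i j) \<le> w * real (Suc l)" using seg_l(2)[OF assms(1)] by blast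
    then have s2: "w * real l + real (uoff l i j) - t \<le> w * real (Suc l)" using assms by linarith
    have "H (w * real l + real (uoff l i j) - t) = w * real l + real (uoff l i j) - t - w * real l"
      using H_seg[OF assms(1) s1 s2] True by simp
    then show ?thesis using True u by (simp add: evt_real)
  next
    case False
    have u: "real (uoff l i j) = w - (real (cpij i j) - 1)" using False cb unfolding uoff_def w_def by (simp add: of_nat_diff)
    have s1: "w * real l \<le> w * real l + real (uoff l i j) + t" using assms by simp
    have s2: "w * real l + real (uoff l i j) + t \<le> w * real (Suc l)"
      using u cb assms by (simp add: algebra_simps)
    have "H (w * real l + real (uoff l i j) + t) = w - (w * real l + real (uoff l i j) + t - w * real l)"
      using H_seg[OF assms(1) s1 s2] False by simp
    then show ?thesis using False u by (simp add: evt_real)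
  qed
qed

lemma evt_CT:
  assumes "l < tau" "i < m" "j < k"
  shows "CT (real (evt l i j))"
proof -
  define s0 where "s0 = real (evt l i j)"
  have H0: "H s0 = real (cpij i j) - 1" using H_evt[OF assms, of 0] unfolding s0_def by (simp split: if_splits)
  have D0: "D j (k + i) s0" using Dc_ij[OF assms(2,3)] H0 by simp
  show ?thesis unfolding change_time_def s0_def[symmetric]
  proof
    assume "\<exists>\<delta>>0. \<forall>s'. \<bar>s' - s0\<bar> < \<delta> \<longrightarrow> CP s' = CP s0"
    then obtain \<delta> where d: "\<delta> > 0" "\<forall>s'. \<bar>s' - s0\<bar> < \<delta> \<longrightarrow> CP s' = CP s0" by blast
    define t where "t = min \<delta> 1 / 2"
    have t: "0 < t" "t \<le> 1/2" "t < \<delta>" using d(1) unfolding t_def by auto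
    define s' where "s' = (if even l then s0 - t else s0 + t)"
    have Hs': "H s' = real (cpij i j) - 1 - t" using H_evt[OF assms, of t] t unfolding s'_def s0_def by simp
    have nD: "\<not> D j (k + i) s'" using Dc_ij[OF assms(2,3)] Hs' t by simp
    have "\<bar>s' - s0\<bar> < \<delta>" using t unfolding s'_def by simp
    then have "CP s' = CP s0" using d(2) by blast
    then have "D j (k + i) s' = D j (k + i) s0"
      using together[OF j_lt[OF assms(2,3)] ki_lt[OF assms(2)], of s'] together[OF j_lt[OF assms(2,3)] ki_lt[OF assms(2)], of s0]
      by simp
    then show False using D0 nD by simp
  qed
qed

lemma evt_range:
  assumes "l < tau" "i < m" "j < k"
  shows "TT 0 < real (evt l i j)" "real (evt l i j) < TT tau"
proof -
  note ub = uoff_bounds[OF assms(2,3)]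
  have "0 < evt l i j" using ub(1)[of l] unfolding evt_def by linarith
  then show "TT 0 < real (evt l i j)" by (simp add: TT_def)
  have "evt l i j < W * l + W" using ub(2)[of l] unfolding evt_def by linarith
  also have "\<dots> = W * Suc l" by simp
  also have "\<dots> \<le> W * tau" using assms(1) by (intro mult_le_mono2) simp
  finally have "evt l i j < W * tau" .
  then have "real (evt l i j) < real (W * tau)" by (simp only: of_nat_less_iff)
  then show "real (evt l i j) < TT tau" using TTtau by simp
qed

lemma divmod_eq:
  assumes "(W::nat) * l + u = W * l' + u'" "u < W" "u' < W"
  shows "l = l'" "u = u'"
proof -
  have W0: "W > 0" using W_ge by simp
  have "(W * l + u) div W = l" "(W * l' + u') div W = l'" using assms(2,3) W0 by simp_all
  then show "l = l'" using assms(1) by metis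
  have "(W * l + u) mod W = u" "(W * l' + u') mod W = u'" using assms(2,3) W0 by simp_all
  then show "u = u'" using assms(1) by metis
qed

lemma cpij_inj:
  assumes "cpij i j = cpij i' j'" "j < k" "j' < k"
  shows "i = i'" "j = j'"
proof -
  have v: "j + k * i = j' + k * i'" using assms(1) unfolding cpij_def by simp
  have "(j + k * i) mod k = j" "(j' + k * i') mod k = j'" using assms by simp_all
  then show "j = j'" using v by simp
  have "(j + k * i) div k = i" "(j' + k * i') div k = i'" using assms k1 by simp_all
  then show "i = i'" using v by simp
qed

lemma evt_inj3:
  assumes a: "l < tau" "i < m" "j < k" "l' < tau" "i' < m" "j' < k" and e: "real (evt l i j) = real (evt l' i' j')"
  shows "l = l' \<and> i = i' \<and> j = j'"
proof -
  have "evt l i j = evt l' i' j'" using e by (simp only: of_nat_eq_iff)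
  then have "W * l + uoff l i j = W * l' + uoff l' i' j'" unfolding evt_def .
  note dm = divmod_eq[OF this uoff_bounds(2)[OF a(2,3)] uoff_bounds(2)[OF a(5,6)]]
  have cb: "2 \<le> cpij i j" "cpij i j + 3 \<le> W" "2 \<le> cpij i' j'" "cpij i' j' + 3 \<le> W"
    using cpij_bounds a by auto
  have "cpij i j = cpij i' j'" using dm cb unfolding uoff_def by (cases "even l'") auto
  then show ?thesis using cpij_inj[OF _ a(3) a(6)] dm(1) by blast
qed

lemma evt_inj: "inj_on (\<lambda>(l, i, j). real (evt l i j)) ({..<tau} \<times> {..<m} \<times> {..<k})"
proof (rule inj_onI)
  fix x y assume x: "x \<in> {..<tau} \<times> {..<m} \<times> {..<k}" and y: "y \<in> {..<tau} \<times> {..<m} \<times> {..<k}"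
    and e: "(\<lambda>(l, i, j). real (evt l i j)) x = (\<lambda>(l, i, j). real (evt l i j)) y"
  obtain l i j where xs: "x = (l, i, j)" by (cases x) auto
  obtain l' i' j' where ys: "y = (l', i', j')" by (cases y) auto
  show "x = y" using evt_inj3[of l i j l' i' j'] x y e unfolding xs ys by auto
qed

lemma count_CT: "tau * m * k \<le> card {s. TT 0 < s \<and> s < TT tau \<and> CT s}"
proof -
  have sub: "(\<lambda>(l, i, j). real (evt l i j)) ` ({..<tau} \<times> {..<m} \<times> {..<k}) \<subseteq> {s. TT 0 < s \<and> s < TT tau \<and> CT s}"
    using evt_CT evt_range by auto
  have "card ((\<lambda>(l, i, j). real (evt l i j)) ` ({..<tau} \<times> {..<m} \<times> {..<k})) = tau * m * k"
    using card_image[OF evt_inj] by (simp add: card_cartesian_product)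
  then show ?thesis using card_mono[OF CT_finite sub] by simp
qed

lemma vertex_bound: "tau * m * k \<le> reeb_vertex_count (k+m) tau TT PP (1/2)"
  unfolding reeb_vertex_count_def using count_CT by linarith

end



context cst
begin

abbreviation "LTm C \<equiv> lifetime (k+m) tau TT PP (1/2) C"

definition "aoff l i j = (if even l then cpij i j - 1 else W - cpij i j - 1)"
definition "aJ l i j = W * l + aoff l i j"

lemma aoff_bounds:
  assumes "i < m" "j < k"
  shows "1 \<le> aoff l i j" "aoff l i j + 3 \<le> W"
  using cpij_bounds[OF assms] unfolding aoff_def by auto

lemma aJ_real: "real (aJ l i j) = w * real l + real (aoff l i j)"
  by (simp add: aJ_def w_def)

lemma seg_D:
  assumes "l < tau" "i < m" "j < k" "w * real l \<le> s" "s \<le> w * real (Suc l)"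
  shows "D j (k + i) s \<longleftrightarrow> real (aJ l i j) \<le> s \<and> s \<le> real (aJ l i j) + 2"
proof -
  note cb = cpij_bounds[OF assms(2,3)]
  have Hs: "H s = (if even l then s - w * real l else w - (s - w * real l))" using H_seg[OF assms(1,4,5)] .
  show ?thesis
  proof (cases "even l")
    case True
    have a: "real (aoff l i j) = real (cpij i j) - 1" using True cb unfolding aoff_def by (simp add: of_nat_diff)
    show ?thesis unfolding Dc_ij[OF assms(2,3)] aJ_real a using Hs True by (simp add: abs_le_iff) linarith
  next
    case False
    have a: "real (aoff l i j) = w - real (cpij i j) - 1" using False cb unfolding aoff_def w_def by (simp add: of_nat_diff)
    show ?thesis unfolding Dc_ij[OF assms(2,3)] aJ_real a using Hs False by (simp add: abs_le_iff) linarith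
  qed
qed

lemma aJ_seg:
  assumes "l < tau" "i < m" "j < k"
  shows "w * real l + 1/2 \<le> real (aJ l i j)" "real (aJ l i j) + 5/2 \<le> w * real (Suc l)"
proof -
  note ab = aoff_bounds[OF assms(2,3), of l]
  have "real (aoff l i j) \<ge> 1" "real (aoff l i j) + 3 \<le> w" using ab unfolding w_def by simp_all
  moreover have "w * real (Suc l) = w * real l + w" by (simp add: algebra_simps)
  ultimately show "w * real l + 1/2 \<le> real (aJ l i j)" "real (aJ l i j) + 5/2 \<le> w * real (Suc l)"
    unfolding aJ_real by linarith+
qed

lemma LTm_pair:
  assumes "i < m" "j < k"
  shows "LTm {j, k + i} = {s. 0 \<le> s \<and> s \<le> w * real tau \<and> D j (k + i) s}"
proof -
  have "j \<noteq> k + i" using assms by simp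
  then show ?thesis unfolding lifetime_def using pair_comp[OF j_lt[OF assms(1,2)] ki_lt[OF assms(1)]]
    by (simp add: TT_def)
qed

lemma J_comp:
  assumes "l < tau" "i < m" "j < k"
  shows "{real (aJ l i j) .. real (aJ l i j) + 2} \<in> components (LTm {j, k + i})"
proof -
  define a where "a = real (aJ l i j)"
  note sg = aJ_seg[OF assms, folded a_def]
  have wt: "w * real (Suc l) \<le> w * real tau" using assms(1) w_pos by simp
  have wl0: "0 \<le> w * real l" using w_pos by simp
  have inseg: "\<And>s. a - 1/2 \<le> s \<Longrightarrow> s \<le> a + 5/2 \<Longrightarrow> w * real l \<le> s \<and> s \<le> w * real (Suc l)"
    using sg by linarith
  have Dseg: "\<And>s. a - 1/2 \<le> s \<Longrightarrow> s \<le> a + 5/2 \<Longrightarrow> D j (k + i) s \<longleftrightarrow> a \<le> s \<and> s \<le> a + 2"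
    using seg_D[OF assms] inseg unfolding a_def by blast
  have LTme: "LTm {j, k + i} = {s. 0 \<le> s \<and> s \<le> w * real tau \<and> D j (k + i) s}" using LTm_pair[OF assms(2,3)] .
  have sub: "{a .. a + 2} \<subseteq> LTm {j, k + i}"
  proof
    fix s assume s: "s \<in> {a .. a + 2}"
    then have "D j (k + i) s" using Dseg by simp
    moreover have "a - 1/2 \<le> s" "s \<le> a + 5/2" using s by auto
    then have "w * real l \<le> s \<and> s \<le> w * real (Suc l)" using inseg by blast
    then have "0 \<le> s" "s \<le> w * real tau" using wt wl0 by linarith+
    ultimately show "s \<in> LTm {j, k + i}" unfolding LTme by simp
  qed
  show ?thesis unfolding a_def[symmetric] in_components_maximal
  proof (intro conjI allI impI)
    show "{a..a + 2} \<noteq> {}" by simp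
    show "{a..a + 2} \<subseteq> LTm {j, k + i}" by (rule sub)
    show "connected {a..a + 2}" by simp
    fix D' assume h: "D' \<noteq> {} \<and> {a..a + 2} \<subseteq> D' \<and> D' \<subseteq> LTm {j, k + i} \<and> connected D'"
    have "a \<in> {a..a+2}" by simp
    then have aD: "a \<in> D'" using h by blast
    have "D' \<subseteq> {a..a + 2}"
    proof
      fix d assume dD: "d \<in> D'"
      show "d \<in> {a..a + 2}"
      proof (rule ccontr)
        assume nd: "d \<notin> {a..a + 2}"
        show False
        proof (cases "d > a + 2")
          case True
          define p where "p = min d (a + 5/2)"
          have "{a..d} \<subseteq> D'" using connected_contains_Icc[of D' a d] h aD dD by blast
          then have "p \<in> D'" unfolding p_def using True by auto
          then have "D j (k + i) p" using h unfolding LTme by auto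
          moreover have "a - 1/2 \<le> p" "p \<le> a + 5/2" "p > a + 2" unfolding p_def using True by auto
          ultimately show False using Dseg by auto
        next
          case False
          then have dl: "d < a" using nd by auto
          define p where "p = max d (a - 1/2)"
          have "{d..a} \<subseteq> D'" using connected_contains_Icc[of D' d a] h aD dD by blast
          then have "p \<in> D'" unfolding p_def using dl by auto
          then have "D j (k + i) p" using h unfolding LTme by auto
          moreover have "a - 1/2 \<le> p" "p \<le> a + 5/2" "p < a" unfolding p_def using dl by auto
          ultimately show False using Dseg by auto
        qed
      qed
    qed
    then show "D' = {a..a + 2}" using h by blast
  qed
qed

lemma aJ_inj3:
  assumes a: "l < tau" "i < m" "j < k" "l' < tau" "i' < m" "j' < k"
    and e: "({j, k + i}, {real (aJ l i j) .. real (aJ l i j) + 2}) = ({j', k + i'}, {real (aJ l' i' j') .. real (aJ l' i' j') + 2})"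
  shows "l = l' \<and> i = i' \<and> j = j'"
proof -
  have s: "{j, k + i} = {j', k + i'}" using e by simp
  have ij: "j = j' \<and> i = i'" using s a by (auto simp: doubleton_eq_iff)
  have "real (aJ l i j) = real (aJ l' i' j')" using e by simp
  then have "aJ l i j = aJ l' i' j'" by (simp only: of_nat_eq_iff)
  then have "W * l + aoff l i j = W * l' + aoff l' i' j'" unfolding aJ_def .
  moreover have "aoff l i j < W" "aoff l' i' j' < W" using aoff_bounds(2)[OF a(2,3), of l] aoff_bounds(2)[OF a(5,6), of l'] by auto
  ultimately have "l = l'" using divmod_eq(1) by blast
  then show ?thesis using ij by simp
qed

lemma fin_LTm: "finite (components (LTm C))"
proof -
  define A1 where "A1 = (\<lambda>q::nat. {real q}) ` {..W * tau}"
  define A2 where "A2 = (\<lambda>q::nat. {real q <..< real q + 1}) ` {..<W * tau}"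
  define F where "F = {A \<in> A1 \<union> A2. A \<subseteq> LTm C}"
  have fF: "finite F" unfolding F_def A1_def A2_def by simp
  have cF: "\<And>A. A \<in> F \<Longrightarrow> connected A" unfolding F_def A1_def A2_def by auto
  have "LTm C = \<Union>F"
  proof
    show "\<Union>F \<subseteq> LTm C" unfolding F_def by blast
    show "LTm C \<subseteq> \<Union>F"
    proof
      fix s assume sL: "s \<in> LTm C"
      then have s0: "0 \<le> s" "s \<le> real (W * tau)" "C \<in> CP s" unfolding lifetime_def using TT0 TTtau by auto
      obtain q :: nat where q0: "real q \<le> s" "s < real q + 1" using floor_ex s0(1) by blast
      show "s \<in> \<Union>F"
      proof (cases "s = real q")
        case True
        then have "q \<le> W * tau" using s0(2) by (simp only: of_nat_le_iff)
        then have "{s} \<in> A1" unfolding A1_def True by blast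
        then have "{s} \<in> F" unfolding F_def using sL by blast
        then show ?thesis by blast
      next
        case False
        then have q1: "real q < s" using q0 by simp
        then have "real q < real (W * tau)" using s0(2) by linarith
        then have qW: "q < W * tau" by (simp only: of_nat_less_iff)
        then have "q + 1 \<le> W * tau" by simp
        then have qW': "real q + 1 \<le> real (W * tau)" by (metis of_nat_1 of_nat_add of_nat_le_iff)
        have "{real q <..< real q + 1} \<subseteq> LTm C"
        proof
          fix s' assume "s' \<in> {real q <..< real q + 1}"
          then have s': "real q < s'" "s' < real q + 1" by auto
          have "CP s' = CP s" using CP_open[OF qW s' q1 q0(2)] .
          moreover have "0 \<le> s'" using s' by linarith
          moreover have "s' \<le> real (W * tau)" using s' qW' by linarith
          ultimately show "s' \<in> LTm C" unfolding lifetime_def using TT0 TTtau s0(3) by auto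
        qed
        moreover have "{real q <..< real q + 1} \<in> A2" unfolding A2_def using qW by blast
        ultimately have "{real q <..< real q + 1} \<in> F" unfolding F_def by blast
        moreover have "s \<in> {real q <..< real q + 1}" using q1 q0(2) by simp
        ultimately show ?thesis by blast
      qed
    qed
  qed
  then show ?thesis using finite_components_Union[OF fF cF] by blast
qed

lemma edges_finite: "finite (reeb_edges (k+m) tau TT PP (1/2))"
proof -
  have "reeb_edges (k+m) tau TT PP (1/2) \<subseteq> Sigma (Pow {..<k+m}) (\<lambda>C. components (LTm C))"
    unfolding reeb_edges_def by auto
  moreover have "finite (Sigma (Pow {..<k+m}) (\<lambda>C. components (LTm C)))"
    using fin_LTm by (intro finite_SigmaI) auto
  ultimately show ?thesis by (rule finite_subset)
qed

lemma edge_bound: "tau * m * k \<le> card (reeb_edges (k+m) tau TT PP (1/2))"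
proof -
  define f where "f = (\<lambda>(l, i, j). ({j, k + i}, {real (aJ l i j) .. real (aJ l i j) + 2}))"
  have sub: "f ` ({..<tau} \<times> {..<m} \<times> {..<k}) \<subseteq> reeb_edges (k+m) tau TT PP (1/2)"
  proof
    fix z assume "z \<in> f ` ({..<tau} \<times> {..<m} \<times> {..<k})"
    then obtain l i j where z: "z = f (l, i, j)" "l < tau" "i < m" "j < k" by auto
    have "{j, k + i} \<subseteq> {..<k+m}" using z by auto
    then show "z \<in> reeb_edges (k+m) tau TT PP (1/2)" unfolding reeb_edges_def z(1) f_def
      using J_comp[OF z(2,3,4)] by simp
  qed
  have inj: "inj_on f ({..<tau} \<times> {..<m} \<times> {..<k})"
  proof (rule inj_onI)
    fix x y assume x: "x \<in> {..<tau} \<times> {..<m} \<times> {..<k}" and y: "y \<in> {..<tau} \<times> {..<m} \<times> {..<k}"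
      and e: "f x = f y"
    obtain l i j where xs: "x = (l, i, j)" by (cases x) auto
    obtain l' i' j' where ys: "y = (l', i', j')" by (cases y) auto
    show "x = y" using aJ_inj3[of l i j l' i' j'] x y e unfolding xs ys f_def by auto
  qed
  have "card (f ` ({..<tau} \<times> {..<m} \<times> {..<k})) = tau * m * k"
    using card_image[OF inj] by (simp add: card_cartesian_product)
  then show ?thesis using card_mono[OF edges_finite sub] by simp
qed

lemma main: "general_position (k+m) tau TT PP (1/2) \<and> (\<forall>i<tau. TT i < TT (Suc i)) \<and>
   tau * m * k \<le> reeb_vertex_count (k+m) tau TT PP (1/2) \<and>
   tau * m * k \<le> card (reeb_edges (k+m) tau TT PP (1/2))"
  using GP TT_mono vertex_bound edge_bound by blast

end

lemma nsq: "2 \<le> (n::nat) \<Longrightarrow> n * n \<le> 8 * ((n - n div 2) * (n div 2))"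
proof -
  assume n: "2 \<le> n"
  obtain h where "n = 2 * h \<or> n = 2 * h + 1" by (metis dvd_mult_div_cancel odd_two_times_div_two_succ)
  then show ?thesis
  proof
    assume "n = 2 * h" then show ?thesis by simp
  next
    assume nh: "n = 2 * h + 1"
    then have e: "n div 2 = h" "n - n div 2 = h + 1" by simp_all
    have h1: "h \<ge> 1" using nh n by simp
    have "n * n = 4 * (h * h) + 4 * h + 1" using nh by (simp add: algebra_simps)
    also have "\<dots> \<le> 8 * (h * h) + 8 * h" using h1 by linarith
    also have "\<dots> = 8 * ((h + 1) * h)" by (simp add: algebra_simps)
    finally show ?thesis using e by simp
  qed
qed

theorem lemma1:
  shows "\<exists>c::real>0. \<forall>n tau :: nat. n \<ge> 2 \<and> tau \<ge> 1 \<longrightarrow>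
    (\<exists>(eps::real) (T::nat \<Rightarrow> real) (P::nat \<Rightarrow> nat \<Rightarrow> real^2).
        eps \<ge> 0 \<and> (\<forall>i<tau. T i < T (Suc i)) \<and> general_position n tau T P eps \<and>
        real (reeb_vertex_count n tau T P eps) \<ge> c * real tau * (real n)^2 \<and>
        real (card (reeb_edges n tau T P eps)) \<ge> c * real tau * (real n)^2)"
proof (rule exI[of _ "1/8::real"], intro conjI allI impI)
  show "(0::real) < 1/8" by simp
  fix n tau :: nat assume a: "2 \<le> n \<and> 1 \<le> tau"
  define m where "m = n div 2"
  define k where "k = n - m"
  have km: "k + m = n" unfolding k_def m_def by simp
  have c: "cst k m tau" unfolding cst_def k_def m_def using a by auto
  note M = cst.main[OF c, unfolded km]
  have sq: "n * n \<le> 8 * (k * m)" using nsq a unfolding k_def m_def by blast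
  have "real tau * (real n)^2 \<le> real tau * (8 * (real k * real m))"
  proof -
    have "real (n * n) \<le> real (8 * (k * m))" using sq by (simp only: of_nat_le_iff)
    then have "(real n)^2 \<le> 8 * (real k * real m)" by (simp add: power2_eq_square)
    then show ?thesis by (intro mult_left_mono) auto
  qed
  then have bnd: "1/8 * real tau * (real n)^2 \<le> real (tau * m * k)" by (simp add: algebra_simps)
  have v: "real (tau * m * k) \<le> real (reeb_vertex_count n tau (cst.TT k m) (cst.PP k m) (1/2))"
    using M by (simp only: of_nat_le_iff)
  have ed: "real (tau * m * k) \<le> real (card (reeb_edges n tau (cst.TT k m) (cst.PP k m) (1/2)))"
    using M by (simp only: of_nat_le_iff)
  show "\<exists>(eps::real) (T::nat \<Rightarrow> real) (P::nat \<Rightarrow> nat \<Rightarrow> real^2).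
        eps \<ge> 0 \<and> (\<forall>i<tau. T i < T (Suc i)) \<and> general_position n tau T P eps \<and>
        real (reeb_vertex_count n tau T P eps) \<ge> 1/8 * real tau * (real n)^2 \<and>
        real (card (reeb_edges n tau T P eps)) \<ge> 1/8 * real tau * (real n)^2"
  proof (intro exI[of _ "1/2"] exI[of _ "cst.TT k m"] exI[of _ "cst.PP k m"] conjI)
    show "(0::real) \<le> 1/2" by simp
    show "\<forall>i<tau. cst.TT k m i < cst.TT k m (Suc i)" using M by blast
    show "general_position n tau (cst.TT k m) (cst.PP k m) (1/2)" using M by blast
    show "1/8 * real tau * (real n)^2 \<le> real (reeb_vertex_count n tau (cst.TT k m) (cst.PP k m) (1/2))"
      using bnd v by linarith
    show "1/8 * real tau * (real n)^2 \<le> real (card (reeb_edges n tau (cst.TT k m) (cst.PP k m) (1/2)))"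
      using bnd ed by linarith
  qed
qed



end
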